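(* Let $\mathcal{U}=\{u_1,\ldots,u_M\}\subset\mathbb{R}\setminus\{0\}$, $u_{\max}=\max_m|u_m|$, $\sigma_{N/k}^2>0$, and $k\ge1$. For $\omega\in\mathbb{R}$ let $h(\omega)=\sum_{m=1}^M\exp\big(\frac{|u_m|u_{\max}}{\sigma_{N/k}^2}-\frac{u_m^2}{2\sigma_{N/k}^2}+\frac{u_m\omega}{\sigma_{N/k}^2}\big)$. For an integer $n\ge 0$, $\omega_1\in\mathbb{R}^n$ and $s\in\{1,\ldots,n\}$ define $$G_s^n(\omega_1)=\sum_{x'\in\mathcal{X}_s^n(\mathcal{U})}\exp\Big(\frac{u_{\max}\|x'\|_1-\frac12\|x'\|_2^2+x'^{\mathrm{T}}\omega_1}{\sigma_{N/k}^2}\Big),$$ and $G_0^n(\omega_1)=1$. For $0\le a\le b\le n$ let $L_{a,b}^n=\prod_{i=0}^{b-a-1}\frac{b-i}{n-a-i}$ (empty product $=1$). For $j\in\{0,\ldots,k\}$ let $H_0(j)=1$ and, for $w\in\{1,\ldots,k-1\}$, $$H_w(j)=\sum_{w'=\max\{j-w,0\}}^{\min\{j,k-w\}}\binom{j}{w'}\big\lceil L^{k-j}_{k-w-w',\,k-j}\big\rceil.$$ Given $\omega_1\in\mathbb{R}^k$, let $\mathcal{I}=\{j\in\{1,\ldots,k\}: h([\omega_1]_j)\le1\}$ and let $\omega_{1,\mathcal{I}^{\mathrm{c}}}$ be the subvector of $\omega_1$ indexed by $\{1,\ldots,k\}\setminus\mathcal{I}$. Then for all $\omega_1\in\mathbb{R}^k$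 and all $w\in\{0,\ldots,k-1\}$, $$G_{k-w}^k(\omega_1)\le H_w(|\mathcal{I}|)\,G^{k-|\mathcal{I}|}_{k-|\mathcal{I}|}(\omega_{1,\mathcal{I}^{\mathrm{c}}}).$$
   Context: $\mathcal{X}_s^n(\mathcal{U})$ is the set of vectors in $\mathbb{R}^n$ with exactly $s$ nonzero entries, each in $\mathcal{U}$. $\lceil\cdot\rceil$ is the ceiling. *)

theory Defs
  imports Complex_Main
begin

text \<open>Vectors in R^n are represented as real lists of length n (index i < n).\<close>

definition umax :: "real set \<Rightarrow> real" where
  "umax U = Max (abs ` U)"

definition hfun :: "real set \<Rightarrow> real \<Rightarrow> real \<Rightarrow> real" where
  "hfun U sigma2 \<omega> =
     (\<Sum>u\<in>U. exp (\<bar>u\<bar> * umax U / sigma2 - u^2 / (2 * sigma2) + u * \<omega> / sigma2))"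

definition Xset :: "nat \<Rightarrow> nat \<Rightarrow> real set \<Rightarrow> real list set" where
  "Xset s n U = {x. length x = n \<and> card {i. i < n \<and> x ! i \<noteq> 0} = s
                   \<and> (\<forall>i<n. x ! i \<noteq> 0 \<longrightarrow> x ! i \<in> U)}"

definition norm1 :: "real list \<Rightarrow> real" where
  "norm1 x = sum_list (map abs x)"

definition norm2sq :: "real list \<Rightarrow> real" where
  "norm2sq x = sum_list (map (\<lambda>a. a^2) x)"

definition dotl :: "real list \<Rightarrow> real list \<Rightarrow> real" where
  "dotl x y = sum_list (map2 (*) x y)"

definition Gfun :: "real set \<Rightarrow> real \<Rightarrow> nat \<Rightarrow> real list \<Rightarrow> real" where
  "Gfun U sigma2 s \<omega> =
     (if s = 0 then 1 else
      (\<Sum>x\<in>Xset s (length \<omega>) U.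
         exp ((umax U * norm1 x - norm2sq x / 2 + dotl x \<omega>) / sigma2)))"

definition Lfun :: "nat \<Rightarrow> nat \<Rightarrow> nat \<Rightarrow> real" where
  "Lfun n a b = (\<Prod>i<b - a. (real b - real i) / (real n - real a - real i))"

definition Hfun :: "nat \<Rightarrow> nat \<Rightarrow> nat \<Rightarrow> real" where
  "Hfun k w j = (if w = 0 then 1 else
     (\<Sum>w'=max (int j - int w) 0 .. min (int j) (int k - int w).
        real (j choose nat w') * of_int \<lceil>Lfun (k - j) (k - w - nat w') (k - j)\<rceil>))"

end

theory Submission
  imports Defs
begin

lemma Xset_alt: "Xset s n U = {x. length x = n \<and> length (filter (\<lambda>a. a \<noteq> 0) x) = s \<and> (\<forall>a\<in>set x. a \<noteq> 0 \<longrightarrow> a \<in> U)}"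
  unfolding Xset_def length_filter_conv_card by (auto simp: in_set_conv_nth) (metis nth_mem)

lemma Xset_fin: assumes "finite U" shows "finite (Xset s n U)"
proof -
  have "Xset s n U \<subseteq> {x. set x \<subseteq> insert 0 U \<and> length x = n}"
    unfolding Xset_alt by auto
  moreover have "finite {x. set x \<subseteq> insert 0 U \<and> length x = n}"
    using assms by (intro finite_lists_length_eq) auto
  ultimately show ?thesis by (rule finite_subset)
qed

lemma Xset_0: "Xset 0 n U = {replicate n 0}"
  unfolding Xset_alt by (auto simp: filter_empty_conv intro: replicate_length_same[symmetric])

lemma Xset_big: "n < s \<Longrightarrow> Xset s n U = {}"
  unfolding Xset_alt using length_filter_le by (auto, metis leD length_filter_le)

lemma Xset_Suc: assumes "0 \<notin> U"
  shows "Xset (Suc s) (Suc n) U = (\<lambda>x. 0#x) ` Xset (Suc s) n U \<union> (\<lambda>(u,x). u#x) ` (U \<times> Xset s n U)"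
proof (intro set_eqI iffI)
  fix y assume "y \<in> Xset (Suc s) (Suc n) U"
  then obtain a x where y: "y = a#x" "length x = n" and f: "length (filter (\<lambda>a. a \<noteq> 0) (a#x)) = Suc s"
    and u: "\<forall>b\<in>set (a#x). b \<noteq> 0 \<longrightarrow> b \<in> U"
    unfolding Xset_alt by (cases y) auto
  show "y \<in> (\<lambda>x. 0#x) ` Xset (Suc s) n U \<union> (\<lambda>(u,x). u#x) ` (U \<times> Xset s n U)"
  proof (cases "a = 0")
    case True
    then have "x \<in> Xset (Suc s) n U" using y f u unfolding Xset_alt by auto
    then show ?thesis using y True by auto
  next
    case False
    then have "x \<in> Xset s n U" "a \<in> U" using y f u unfolding Xset_alt by auto
    then show ?thesis using y by auto
  qed
next
  fix y assume "y \<in> (\<lambda>x. 0#x) ` Xset (Suc s) n U \<union> (\<lambda>(u,x). u#x) ` (U \<times> Xset s n U)"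
  then show "y \<in> Xset (Suc s) (Suc n) U" using assms unfolding Xset_alt by auto
qed

definition TT :: "real set \<Rightarrow> real \<Rightarrow> real list \<Rightarrow> real list \<Rightarrow> real" where
  "TT U c \<omega> x = exp ((umax U * norm1 x - norm2sq x / 2 + dotl x \<omega>) / c)"

definition ff :: "real set \<Rightarrow> real \<Rightarrow> real \<Rightarrow> real \<Rightarrow> real" where
  "ff U c b a = exp ((umax U * \<bar>a\<bar> - a^2/2 + a*b) / c)"

lemma TT_cons: "TT U c (b#\<omega>) (a#x) = ff U c b a * TT U c \<omega> x"
  unfolding TT_def ff_def norm1_def norm2sq_def dotl_def
  by (simp add: exp_add[symmetric] add_divide_distrib[symmetric] diff_divide_distrib[symmetric] algebra_simps)

lemma TT_rep: "TT U c \<omega> (replicate (length \<omega>) 0) = 1"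
proof (induction \<omega>)
  case Nil then show ?case by (simp add: TT_def norm1_def norm2sq_def dotl_def)
next
  case (Cons b \<omega>) then show ?case by (simp add: TT_cons ff_def)
qed

lemma hfun_ff: "hfun U c b = (\<Sum>u\<in>U. ff U c b u)"
  unfolding hfun_def ff_def by (intro sum.cong refl arg_cong[where f=exp]) (cases "c = 0", simp_all add: field_simps)

definition SS where "SS U c s \<omega> = (\<Sum>x\<in>Xset s (length \<omega>) U. TT U c \<omega> x)"

lemma Gfun_SS: "Gfun U c s \<omega> = SS U c s \<omega>"
  unfolding Gfun_def SS_def TT_def[symmetric] using TT_rep by (simp add: Xset_0)

lemma SS_0: "SS U c 0 \<omega> = 1"
  unfolding SS_def using TT_rep by (simp add: Xset_0)

lemma SS_big: "length \<omega> < s \<Longrightarrow> SS U c s \<omega> = 0"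
  unfolding SS_def by (simp add: Xset_big)

lemma SS_nonneg: "SS U c s \<omega> \<ge> 0"
  unfolding SS_def TT_def by (intro sum_nonneg) auto

lemma SS_Suc: assumes "finite U" "0 \<notin> U"
  shows "SS U c (Suc s) (b#\<omega>) = SS U c (Suc s) \<omega> + hfun U c b * SS U c s \<omega>"
proof -
  let ?A = "(\<lambda>x. 0#x) ` Xset (Suc s) (length \<omega>) U"
  let ?B = "(\<lambda>(u,x). u#x) ` (U \<times> Xset s (length \<omega>) U)"
  have fin: "finite ?A" "finite ?B" using assms Xset_fin by auto
  have dis: "?A \<inter> ?B = {}" using assms by auto
  have "SS U c (Suc s) (b#\<omega>) = sum (TT U c (b#\<omega>)) ?A + sum (TT U c (b#\<omega>)) ?B"
    unfolding SS_def using Xset_Suc[OF assms(2)] fin dis by (simp add: sum.union_disjoint)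
  also have "sum (TT U c (b#\<omega>)) ?A = SS U c (Suc s) \<omega>"
    unfolding SS_def by (subst sum.reindex) (auto simp: inj_on_def TT_cons ff_def)
  also have "sum (TT U c (b#\<omega>)) ?B = (\<Sum>(u,x)\<in>U \<times> Xset s (length \<omega>) U. ff U c b u * TT U c \<omega> x)"
    by (subst sum.reindex) (auto simp: inj_on_def TT_cons intro!: sum.cong)
  also have "\<dots> = hfun U c b * SS U c s \<omega>"
    unfolding SS_def hfun_ff sum_product sum.cartesian_product by simp
  finally show ?thesis .
qed


lemma hfun_nonneg: "hfun U c b \<ge> 0"
  unfolding hfun_def by (intro sum_nonneg) auto

lemma one_le_pl: "(1::real) \<le> prod_list (map (\<lambda>a. max 1 (g a)) xs)"
proof (induction xs)
  case (Cons a xs)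
  have "(1::real) * 1 \<le> max 1 (g a) * prod_list (map (\<lambda>a. max 1 (g a)) xs)"
    using Cons by (intro mult_mono) auto
  then show ?case by simp
qed simp

lemma SS_bound: assumes "finite U" "0 \<notin> U"
  shows "SS U c s \<omega> \<le> real (length \<omega> choose s) * prod_list (map (\<lambda>a. max 1 (hfun U c a)) \<omega>)"
proof (induction \<omega> arbitrary: s)
  case Nil
  then show ?case by (cases s) (auto simp: SS_0 SS_big)
next
  case (Cons b \<omega>)
  let ?M = "prod_list (map (\<lambda>a. max 1 (hfun U c a)) \<omega>)"
  have M0: "?M \<ge> 0" by (induction \<omega>) (auto intro: mult_nonneg_nonneg)
  show ?case
  proof (cases s)
    case 0
    have "1 \<le> prod_list (map (\<lambda>a. max 1 (hfun U c a)) (b#\<omega>))"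
      by (rule one_le_pl)
    then show ?thesis using 0 by (simp add: SS_0)
  next
    case (Suc t)
    have h0: "hfun U c b \<ge> 0" by (rule hfun_nonneg)
    have "SS U c s (b#\<omega>) = SS U c (Suc t) \<omega> + hfun U c b * SS U c t \<omega>"
      using Suc SS_Suc[OF assms] by simp
    also have "\<dots> \<le> real (length \<omega> choose Suc t) * ?M + hfun U c b * (real (length \<omega> choose t) * ?M)"
      using Cons.IH[of "Suc t"] Cons.IH[of t] h0 by (intro add_mono mult_left_mono) auto
    also have "\<dots> \<le> max 1 (hfun U c b) * real (length \<omega> choose Suc t) * ?M + max 1 (hfun U c b) * (real (length \<omega> choose t) * ?M)"
    proof -
      have "1 * real (length \<omega> choose Suc t) \<le> max 1 (hfun U c b) * real (length \<omega> choose Suc t)"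
        by (intro mult_right_mono) auto
      then show ?thesis
        using M0 by (intro add_mono mult_right_mono) (auto intro!: mult_nonneg_nonneg)
    qed
    also have "\<dots> = real (length (b#\<omega>) choose s) * prod_list (map (\<lambda>a. max 1 (hfun U c a)) (b#\<omega>))"
      using Suc by (simp add: algebra_simps)
    finally show ?thesis .
  qed
qed


lemma SS_full: assumes "finite U" "0 \<notin> U"
  shows "SS U c (length \<omega>) \<omega> = prod_list (map (hfun U c) \<omega>)"
  by (induction \<omega>) (auto simp: SS_0 SS_Suc[OF assms] SS_big)

lemma nths_filter: "nths xs {i. i < length xs \<and> P (xs!i)} = filter P xs"
proof (induction xs)
  case (Cons x xs)
  have "{j. Suc j \<in> {i. i < length (x#xs) \<and> P ((x#xs)!i)}} = {i. i < length xs \<and> P (xs!i)}" by auto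
  then show ?case using Cons by (simp add: nths_Cons)
qed simp

lemma pl_max_filter: "prod_list (map (\<lambda>a. max 1 (g a)) xs) = prod_list (map g (filter (\<lambda>a. \<not> g a \<le> (1::real)) xs))"
  by (induction xs) auto

lemma prod_fact: "m \<le> n \<Longrightarrow> (\<Prod>i<m. real n - real i) * fact (n - m) = fact n"
proof (induction m)
  case (Suc m)
  have "n - m = Suc (n - Suc m)" using Suc by simp
  then have "fact (n - m) = (real n - real m) * (fact (n - Suc m) :: real)"
    using Suc by (simp add: of_nat_diff)
  have "(\<Prod>i<Suc m. real n - real i) * fact (n - Suc m) = (\<Prod>i<m. real n - real i) * ((real n - real m) * fact (n - Suc m))"
    by (simp add: algebra_simps)
  also have "\<dots> = fact n" using Suc \<open>fact (n - m) = _\<close> by simp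
  finally show ?case .
qed simp

lemma Lfun_choose: assumes "a \<le> n" shows "Lfun n a n = real (n choose a)"
proof -
  have "Lfun n a n = (\<Prod>i<n - a. real n - real i) / (\<Prod>i<n - a. real (n - a) - real i)"
    unfolding Lfun_def using assms by (simp add: prod_dividef of_nat_diff)
  also have "(\<Prod>i<n - a. real n - real i) = fact n / fact a"
    using prod_fact[of "n - a" n] assms by (simp add: field_simps)
  also have "(\<Prod>i<n - a. real (n - a) - real i) = fact (n - a)"
    using prod_fact[of "n - a" "n - a"] by simp
  finally show ?thesis using assms by (simp add: binomial_fact)
qed


lemma Hfun_ge: assumes "1 \<le> w" "j \<le> k" "w \<le> k"
  shows "real (k choose (k - w)) \<le> Hfun k w j"
proof -
  define l where "l = j - w"
  define h where "h = min j (k - w)"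
  have lo: "max (int j - int w) 0 = int l" unfolding l_def by simp
  have hi: "min (int j) (int k - int w) = int h" unfolding h_def using assms by simp
  have "Hfun k w j = (\<Sum>a\<in>{l..h}. real (j choose a) * of_int \<lceil>Lfun (k - j) (k - w - a) (k - j)\<rceil>)"
    unfolding Hfun_def lo hi using assms
    by (simp add: image_int_atLeastAtMost[symmetric] sum.reindex)
  also have "\<dots> = (\<Sum>a\<in>{l..h}. real ((j choose a) * ((k - j) choose (k - w - a))))"
  proof (intro sum.cong refl)
    fix a assume "a \<in> {l..h}"
    then have "k - w - a \<le> k - j" using assms unfolding l_def h_def by auto
    then show "real (j choose a) * of_int \<lceil>Lfun (k - j) (k - w - a) (k - j)\<rceil> = real ((j choose a) * ((k - j) choose (k - w - a)))"
      by (simp add: Lfun_choose)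
  qed
  also have "\<dots> = real (\<Sum>a\<le>k - w. (j choose a) * ((k - j) choose (k - w - a)))"
    unfolding of_nat_sum[symmetric]
  proof (intro arg_cong[where f=real] sum.mono_neutral_left)
    show "{l..h} \<subseteq> {..k - w}" unfolding h_def by auto
    show "\<forall>a\<in>{..k - w} - {l..h}. (j choose a) * ((k - j) choose (k - w - a)) = 0"
    proof
      fix a assume a: "a \<in> {..k - w} - {l..h}"
      show "(j choose a) * ((k - j) choose (k - w - a)) = 0"
      proof (cases "a > j")
        case True then show ?thesis by simp
      next
        case False
        then have "a < l" using a unfolding h_def by auto
        then have "k - j < k - w - a" using assms unfolding l_def by auto
        then show ?thesis by simp
      qed
    qed
  qed auto
  also have "\<dots> = real (k choose (k - w))"
    using vandermonde[of j "k - j" "k - w"] assms by simp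
  finally show ?thesis by simp
qed


theorem lemma5:
  fixes U :: "real set" and sigma2 :: real and k w :: nat and \<omega>1 :: "real list"
  assumes "finite U" and "U \<noteq> {}" and "0 \<notin> U"
    and "sigma2 > 0" and "k \<ge> 1"
    and "length \<omega>1 = k"
    and "w \<le> k - 1"
  shows "Gfun U sigma2 (k - w) \<omega>1
      \<le> Hfun k w (card {j. j < k \<and> hfun U sigma2 (\<omega>1 ! j) \<le> 1})
        * Gfun U sigma2 (k - card {j. j < k \<and> hfun U sigma2 (\<omega>1 ! j) \<le> 1})
            (nths \<omega>1 ({0..<k} - {j. j < k \<and> hfun U sigma2 (\<omega>1 ! j) \<le> 1}))"
proof -
  let ?h = "hfun U sigma2"
  define Q where "Q = {j. j < k \<and> ?h (\<omega>1 ! j) \<le> 1}"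
  define \<omega>c where "\<omega>c = filter (\<lambda>a. \<not> ?h a \<le> 1) \<omega>1"
  have jk: "card Q \<le> k" unfolding Q_def by (rule order_trans[OF card_mono[of "{..<k}"]]) auto
  have "{0..<k} - Q = {i. i < length \<omega>1 \<and> \<not> ?h (\<omega>1 ! i) \<le> 1}"
    unfolding Q_def using assms(6) by auto
  then have nt: "nths \<omega>1 ({0..<k} - Q) = \<omega>c" unfolding \<omega>c_def using nths_filter[of \<omega>1 "\<lambda>a. \<not> ?h a \<le> 1"] by simp
  have "length (filter (\<lambda>a. ?h a \<le> 1) \<omega>1) = card Q"
    unfolding Q_def length_filter_conv_card assms(6) ..
  then have len: "length \<omega>c = k - card Q"
    using sum_length_filter_compl[of "\<lambda>a. ?h a \<le> 1" \<omega>1] assms(6) unfolding \<omega>c_def by simp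
  define P where "P = prod_list (map ?h \<omega>c)"
  have rhs: "Gfun U sigma2 (k - card Q) \<omega>c = P"
    unfolding Gfun_SS P_def len[symmetric] using SS_full[OF assms(1,3)] by simp
  have P1: "P \<ge> 1" unfolding P_def \<omega>c_def pl_max_filter[symmetric] by (rule one_le_pl)
  have "Gfun U sigma2 (k - w) \<omega>1 \<le> real (k choose (k - w)) * P"
    unfolding Gfun_SS P_def \<omega>c_def pl_max_filter[symmetric]
    using SS_bound[OF assms(1,3), of sigma2 "k - w" \<omega>1] assms(6) by simp
  also have "\<dots> \<le> Hfun k w (card Q) * P"
  proof (intro mult_right_mono)
    show "real (k choose (k - w)) \<le> Hfun k w (card Q)"
    proof (cases "w = 0")
      case True then show ?thesis by (simp add: Hfun_def)
    next
      case False then show ?thesis using Hfun_ge[of w "card Q" k] jk assms by simp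
    qed
  qed (use P1 in simp)
  finally show ?thesis unfolding Q_def[symmetric] nt rhs .
qed

end
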